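(* Consider the ADEPT-type cluster-randomized SMART with common cluster size $m$ and no covariates, analyzed as in the context. Fix $b_2\in\{1,-1\}$. Assume: (a) consistency of potential outcomes; (b) $E_{1,b_2}\big[(\mathbf Y_i-\beta_{(1,b_2)}1_m)(\mathbf Y_i-\beta_{(1,b_2)}1_m)^T\mid R_i=0\big]\preceq\mathrm{Cov}_{1,b_2}(\mathbf Y_i)$ in the Loewner order; (c) $\mathrm{Cov}_{1,b_2}(\mathbf Y_i)=\sigma^2_{1,b_2}\mathrm{Exch}_m(\rho_{1,b_2})$ and $\mathrm{Cov}_{-1,\cdot}(\mathbf Y_i)=\sigma^2_{-1,\cdot}\mathrm{Exch}_m(\rho_{-1,\cdot})$. Then $$\tau^2(1,b_2)\le\frac{2(2-p_1)\sigma^2_{1,b_2}[1+(m-1)\rho_{1,b_2}]}{m},\qquad \tau^2(-1,\cdot)=\frac{2\sigma^2_{-1,\cdot}[1+(m-1)\rho_{-1,\cdot}]}{m}.$$ Consequently, suppose $\rho_{1,b_2}=\rho_{-1,\cdot}=\rho$ and $\sigma^2_{1,b_2}\le\sigma^2_{-1,\cdot}$, and set $\sigma^2=(\sigma^2_{1,b_2}+\sigma^2_{-1,\cdot})/2$. Then for any $\delta>0$ and $\alpha,\beta\in(0,1)$, $$\frac{(z_\beta+z_{\alpha/2})^2\big(\tau^2(1,b_2)+\tau^2(-1,\cdot)\big)}{\delta^2\sigma^2}\le\frac{4(z_\beta+z_{\alpha/2})^2}{m\delta^2}\,\big(1+(m-1)\rho\big)\Big(1+\frac{1-p_1}{2}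\Big).$$
   Context: ADEPT-type cluster-randomized SMART. There are $N$ i.i.d. clusters, each with $m$ individuals and outcome vector $\mathbf Y_i\in\mathbb R^m$. - Stage 1: $A_{1i}\in\{1,-1\}$ is assigned with probability $1/2$ each. - A response indicator $R_i\in\{0,1\}$ is then observed, with $p_1=\Pr(R_i=1\mid A_{1i}=1)$. - Stage 2: only clusters with $A_{1i}=1$ and $R_i=0$ are re-randomized, to $A_{2i}\in\{1,-1\}$ with probability $1/2$ each. There are three embedded DTRs: $(1,1)$, $(1,-1)$ and $(-1,\cdot)$. - A cluster with $A_{1i}=-1$ is consistent with $(-1,\cdot)$. - A cluster with $A_{1i}=1,R_i=1$ is consistent with both $(1,1)$ and $(1,-1)$. - A cluster with $A_{1i}=1,R_i=0,A_{2i}=a_2$ is consistent with $(1,a_2)$. $I_i(a_1,a_2)$ is the corresponding consistency indicator. The known weights are $W_i=4$ if $A_{1i}=1,R_i=0$ and $W_i=2$ otherwise. $E_{a_1,a_2}$ and $\mathrm{Cov}_{a_1,a_2}$ refer to the potential-outcome distribution had all clusters followed the DTR. The mean model is the cell-mean parameterization $E_{a_1,a_2}(Y_{ij})=\beta_{(a_1,a_2)}$, with one parameter per embedded DTR. It is estimated by solving $$\sum_i\sum_{(a_1,a_2)}I_i(a_1,a_2)\,W_i\,D_{(a_1,a_2)}^TV^{-1}\big(\mathbf Y_i-\beta_{(a_1,a_2)}1_m\big)=0,$$ with $D_{(a_1,a_2)}=1_me_{(a_1,a_2)}^T$ and an exchangeable working covariance $V=s^2\mathrm{Exch}_m(r)$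 (positive definite). Here $\mathrm{Exch}_m(r)$ is the $m\times m$ matrix with unit diagonal and off-diagonal entries $r$, and $1_m$ is the all-ones vector. $\tau^2(a_1,a_2)$ is the $(a_1,a_2)$ diagonal entry of the sandwich matrix $J^{-1}AJ^{-1}$, where $J=E\sum I_iW_iD^TV^{-1}D$ and $A=E[U_iU_i^T]$, with $U_i$ the summand of the estimating equation at the true parameters. This is the asymptotic variance of $\sqrt N\hat\beta_{(a_1,a_2)}$. $z_\kappa$ is the upper $\kappa$ quantile of the standard normal distribution. *)

theory Defs
  imports "HOL-Probability.Probability"
begin

datatype dtr = DTR_1_1 | DTR_1_m1 | DTR_m1

lemma UNIV_dtr: "(UNIV :: dtr set) = {DTR_1_1, DTR_1_m1, DTR_m1}"
  using dtr.exhaust by auto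

instance dtr :: finite
  by standard (simp add: UNIV_dtr)

definition dtr1 :: "real \<Rightarrow> dtr" where
  "dtr1 b2 = (if b2 = 1 then DTR_1_1 else DTR_1_m1)"

text \<open>Consistency indicator I_i(a1,a2) (as a real 0/1).  A1, A2 take values in {1,-1};
  R is the stage-1 response indicator (True = responder).\<close>
definition consist :: "('w \<Rightarrow> real) \<Rightarrow> ('w \<Rightarrow> bool) \<Rightarrow> ('w \<Rightarrow> real) \<Rightarrow> dtr \<Rightarrow> 'w \<Rightarrow> real" where
  "consist A1 R A2 d w =
     (case d of
        DTR_1_1 \<Rightarrow> (if A1 w = 1 \<and> (R w \<or> A2 w = 1) then 1 else 0)
      | DTR_1_m1 \<Rightarrow> (if A1 w = 1 \<and> (R w \<or> A2 w = -1) then 1 else 0)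
      | DTR_m1 \<Rightarrow> (if A1 w = -1 then 1 else 0))"

definition weight :: "('w \<Rightarrow> real) \<Rightarrow> ('w \<Rightarrow> bool) \<Rightarrow> 'w \<Rightarrow> real" where
  "weight A1 R w = (if A1 w = 1 \<and> \<not> R w then 4 else 2)"

definition ones :: "real^'m" where
  "ones = (\<chi> j. 1)"

definition outer :: "real^'n \<Rightarrow> real^'m \<Rightarrow> real^'m^'n" where
  "outer u v = (\<chi> i j. u $ i * v $ j)"

definition exch :: "real \<Rightarrow> real^'m^'m" where
  "exch r = (\<chi> i j. if i = j then 1 else r)"

definition loewner_le :: "real^'m^'m \<Rightarrow> real^'m^'m \<Rightarrow> bool" where
  "loewner_le A B \<longleftrightarrow> (\<forall>x. x \<bullet> (A *v x) \<le> x \<bullet> (B *v x))"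

definition pos_def :: "real^'m^'m \<Rightarrow> bool" where
  "pos_def V \<longleftrightarrow> transpose V = V \<and> (\<forall>x. x \<noteq> 0 \<longrightarrow> 0 < x \<bullet> (V *v x))"

definition Dmat :: "dtr \<Rightarrow> real^dtr^'m" where
  "Dmat d = (\<chi> j k. if k = d then 1 else 0)"

definition covm :: "'w measure \<Rightarrow> ('w \<Rightarrow> real^'m) \<Rightarrow> real^'m^'m" where
  "covm M X = (\<integral>w. outer (X w - (\<integral>v. X v \<partial>M)) (X w - (\<integral>v. X v \<partial>M)) \<partial>M)"

definition cond_exp_ev :: "'w measure \<Rightarrow> ('w \<Rightarrow> bool) \<Rightarrow> ('w \<Rightarrow> 'b::{banach,second_countable_topology}) \<Rightarrow> 'b" where
  "cond_exp_ev M P f = (\<integral>w. (if P w then f w else 0) \<partial>M) /\<^sub>R measure M {w\<in>space M. P w}"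

definition z_upper :: "real \<Rightarrow> real" where
  "z_upper \<kappa> = (THE x. (\<integral>t. indicator {x<..} t * std_normal_density t \<partial>lborel) = \<kappa>)"

text \<open>Summand U_i of the estimating equation at the true parameters beta.\<close>
definition Ufun :: "('w \<Rightarrow> real) \<Rightarrow> ('w \<Rightarrow> bool) \<Rightarrow> ('w \<Rightarrow> real) \<Rightarrow> ('w \<Rightarrow> real^'m)
    \<Rightarrow> real^'m^'m \<Rightarrow> (dtr \<Rightarrow> real) \<Rightarrow> 'w \<Rightarrow> real^dtr" where
  "Ufun A1 R A2 Y V \<beta> w =
     (\<Sum>d\<in>UNIV. (consist A1 R A2 d w * weight A1 R w) *\<^sub>R
        (transpose (Dmat d :: real^dtr^'m) *v (matrix_inv V *v (Y w - \<beta> d *\<^sub>R ones))))"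

definition Jmat :: "'w measure \<Rightarrow> ('w \<Rightarrow> real) \<Rightarrow> ('w \<Rightarrow> bool) \<Rightarrow> ('w \<Rightarrow> real)
    \<Rightarrow> real^'m^'m \<Rightarrow> real^dtr^dtr" where
  "Jmat M A1 R A2 V =
     (\<integral>w. (\<Sum>d\<in>UNIV. (consist A1 R A2 d w * weight A1 R w) *\<^sub>R
        (transpose (Dmat d :: real^dtr^'m) ** matrix_inv V ** Dmat d)) \<partial>M)"

definition Amat :: "'w measure \<Rightarrow> ('w \<Rightarrow> real) \<Rightarrow> ('w \<Rightarrow> bool) \<Rightarrow> ('w \<Rightarrow> real)
    \<Rightarrow> ('w \<Rightarrow> real^'m) \<Rightarrow> real^'m^'m \<Rightarrow> (dtr \<Rightarrow> real) \<Rightarrow> real^dtr^dtr" where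
  "Amat M A1 R A2 Y V \<beta> =
     (\<integral>w. outer (Ufun A1 R A2 Y V \<beta> w) (Ufun A1 R A2 Y V \<beta> w) \<partial>M)"

definition tau2 :: "'w measure \<Rightarrow> ('w \<Rightarrow> real) \<Rightarrow> ('w \<Rightarrow> bool) \<Rightarrow> ('w \<Rightarrow> real)
    \<Rightarrow> ('w \<Rightarrow> real^'m) \<Rightarrow> real^'m^'m \<Rightarrow> (dtr \<Rightarrow> real) \<Rightarrow> dtr \<Rightarrow> real" where
  "tau2 M A1 R A2 Y V \<beta> d =
     (matrix_inv (Jmat M A1 R A2 V) ** Amat M A1 R A2 Y V \<beta> ** matrix_inv (Jmat M A1 R A2 V)) $ d $ d"

end

theory Submission
  imports Defs
begin


lemma axis_nth2: "(c *\<^sub>R axis i (axis j (1::real))) $ a $ b = (if a = i then (if b = j then c else 0) else 0)"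
  by (simp add: axis_def)
lemma axis_nth1: "(c *\<^sub>R axis i (1::real)) $ a = (if a = i then c else 0)"
  by (simp add: axis_def)

lemma sum_if_const: "(\<Sum>x\<in>A. if P then f x else 0) = (if P then (\<Sum>x\<in>A. f x) else (0::'a::comm_monoid_add))"
  by auto

lemma vec_sum_axis: fixes h :: "'n::finite \<Rightarrow> real"
  shows "(\<chi> i. h i) = (\<Sum>i\<in>UNIV. h i *\<^sub>R axis i 1)"
  by (simp add: vec_eq_iff sum_component axis_nth1 axis_nth2 sum_if_const del: vector_scaleR_component)

lemma mat_sum_axis: fixes h :: "'n::finite \<Rightarrow> 'k::finite \<Rightarrow> real"
  shows "(\<chi> i j. h i j) = (\<Sum>i\<in>UNIV. \<Sum>j\<in>UNIV. h i j *\<^sub>R axis i (axis j 1))"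
  by (simp add: vec_eq_iff sum_component axis_nth1 axis_nth2 sum_if_const del: vector_scaleR_component)

lemma integrable_vec: fixes f :: "'w \<Rightarrow> real^'n"
  assumes "\<And>i. integrable M (\<lambda>w. f w $ i)" shows "integrable M f"
proof -
  have eq: "f = (\<lambda>w. \<Sum>i\<in>UNIV. (f w $ i) *\<^sub>R axis i 1)"
    by (rule ext, subst vec_sum_axis[symmetric]) (simp add: vec_eq_iff)
  show ?thesis using assms
    by (subst eq) (intro Bochner_Integration.integrable_sum integrable_scaleR_left; auto)
qed

lemma integrable_mat: fixes f :: "'w \<Rightarrow> real^'n^'k"
  assumes "\<And>i j. integrable M (\<lambda>w. f w $ i $ j)" shows "integrable M f"
proof -
  have eq: "f = (\<lambda>w. \<Sum>i\<in>UNIV. \<Sum>j\<in>UNIV. (f w $ i $ j) *\<^sub>R axis i (axis j 1))"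
    by (rule ext, subst mat_sum_axis[symmetric]) (simp add: vec_eq_iff)
  show ?thesis using assms
    by (subst eq) (intro Bochner_Integration.integrable_sum integrable_scaleR_left; auto)
qed

lemma integral_vec_nth: fixes f :: "'w \<Rightarrow> 'a::euclidean_space^'n"
  assumes "integrable M f" shows "integral\<^sup>L M f $ i = (\<integral>w. f w $ i \<partial>M)"
  using integral_bounded_linear[OF bounded_linear_vec_nth assms] by simp

lemma integral_mat_nth: fixes f :: "'w \<Rightarrow> real^'n^'k"
  assumes "integrable M f" shows "integral\<^sup>L M f $ i $ j = (\<integral>w. f w $ i $ j \<partial>M)"
proof -
  have "integrable M (\<lambda>w. f w $ i)" by (rule integrable_bounded_linear[OF bounded_linear_vec_nth assms])
  then show ?thesis using integral_vec_nth[OF assms] integral_vec_nth by metis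
qed




lemma sum_exch: "(\<Sum>j\<in>(UNIV::'m::finite set). if i = j then 1 else r) = 1 + (real CARD('m) - 1) * r"
proof -
  have "(\<Sum>j\<in>(UNIV::'m set). if i = j then 1 else r) = (if i = i then 1 else r) + (\<Sum>j\<in>UNIV - {i}. if i = j then 1 else r)"
    by (rule sum.remove) auto
  also have "(\<Sum>j\<in>UNIV - {i}. if i = j then 1 else r) = (\<Sum>j\<in>UNIV - {i}. r)"
    by (rule sum.cong) auto
  also have "\<dots> = real (CARD('m) - 1) * r" by (simp add: card_Diff_singleton)
  finally show ?thesis
    by (simp add: of_nat_diff Suc_leI)
qed

lemma exch_ones: "(exch r :: real^'m^'m) *v ones = (1 + (real CARD('m) - 1) * r) *\<^sub>R ones"
  using sum_exch[of _ r, where 'm='m] by (simp add: vec_eq_iff exch_def ones_def matrix_vector_mult_def)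

lemma ones_inner: "ones \<bullet> (v::real^'m) = (\<Sum>j\<in>UNIV. v $ j)"
  by (simp add: inner_vec_def ones_def)

lemma ones_quad: "ones \<bullet> ((K::real^'m^'m) *v ones) = (\<Sum>i\<in>UNIV. \<Sum>j\<in>UNIV. K $ i $ j)"
  by (simp add: inner_vec_def ones_def matrix_vector_mult_def)

lemma sum_sum_exch: "(\<Sum>i\<in>UNIV. \<Sum>j\<in>UNIV. (c *\<^sub>R (exch r :: real^'m^'m)) $ i $ j)
   = c * real CARD('m) * (1 + (real CARD('m) - 1) * r)"
  using sum_exch[of _ r, where 'm='m] by (simp add: exch_def sum_distrib_left[symmetric])

lemma scaleR_vmult: "((c::real) *\<^sub>R x) v* (A::real^'n^'m) = c *\<^sub>R (x v* A)"
  by (simp add: vec_eq_iff vector_matrix_mult_def sum_distrib_left mult.assoc)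

lemma Vinv_facts:
  fixes V :: "real^'m^'m"
  assumes pd: "pos_def V" and Vo: "V *v ones = lam *\<^sub>R ones"
  shows "0 < lam" and "\<And>v. ones \<bullet> (matrix_inv V *v v) = (ones \<bullet> v) / lam"
proof -
  have sym: "transpose V = V" and pos: "\<And>x. x \<noteq> 0 \<Longrightarrow> 0 < x \<bullet> (V *v x)"
    using pd by (auto simp: pos_def_def)
  have ones0: "ones \<noteq> (0::real^'m)" by (simp add: ones_def vec_eq_iff)
  have "0 < ones \<bullet> (V *v ones)" using pos[OF ones0] .
  also have "\<dots> = lam * real CARD('m)" using Vo by (simp add: inner_vec_def ones_def)
  finally show lp: "0 < lam" by (simp add: zero_less_mult_iff)
  have "\<forall>x. V *v x = 0 \<longrightarrow> x = 0"
    using pos by (metis inner_zero_right less_irrefl)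
  then have "invertible V" using matrix_left_invertible_ker invertible_left_inverse by blast
  then have "\<exists>A'. V ** A' = mat 1 \<and> A' ** V = mat 1" by (simp add: invertible_def)
  then have VV: "V ** matrix_inv V = mat 1" unfolding matrix_inv_def by (rule someI_ex[THEN conjunct1])
  have "ones v* V = lam *\<^sub>R ones" using Vo sym by (metis transpose_matrix_vector)
  then have "(lam *\<^sub>R ones) v* matrix_inv V = ones"
    by (metis VV vector_matrix_mul_assoc vector_matrix_mul_rid)
  then have ov: "ones v* matrix_inv V = (1/lam) *\<^sub>R ones"
  proof -
    have H2: "lam *\<^sub>R (ones v* matrix_inv V) = ones"
      using \<open>(lam *\<^sub>R ones) v* matrix_inv V = ones\<close> by (simp add: scaleR_vmult)
    have "ones v* matrix_inv V = (1/lam) *\<^sub>R (lam *\<^sub>R (ones v* matrix_inv V))" using lp by simp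
    also have "\<dots> = (1/lam) *\<^sub>R ones" by (simp only: H2)
    finally show ?thesis .
  qed
  fix v
  show "ones \<bullet> (matrix_inv V *v v) = (ones \<bullet> v) / lam"
    using ov by (metis dot_lmul_matrix inner_scaleR_left divide_inverse_commute inverse_eq_divide)
qed




lemma abs_mult_le_sq2: "2 * \<bar>a * b\<bar> \<le> a\<^sup>2 + (b::real)\<^sup>2"
proof -
  have "0 \<le> (\<bar>a\<bar> - \<bar>b\<bar>)\<^sup>2" by simp
  moreover have "(\<bar>a\<bar> - \<bar>b\<bar>)\<^sup>2 = a\<^sup>2 + b\<^sup>2 - 2 * \<bar>a * b\<bar>"
    by (simp add: power2_eq_square abs_mult algebra_simps)
  ultimately show ?thesis by linarith
qed

lemma abs_mult_le_sq: "\<bar>a * b\<bar> \<le> a\<^sup>2 + (b::real)\<^sup>2"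
  using abs_mult_le_sq2[of a b] abs_ge_zero[of "a*b"] by linarith

lemma int_mult_sq:
  fixes f g :: "'w \<Rightarrow> real"
  assumes "integrable M (\<lambda>w. (f w)\<^sup>2)" "integrable M (\<lambda>w. (g w)\<^sup>2)"
    "f \<in> borel_measurable M" "g \<in> borel_measurable M"
  shows "integrable M (\<lambda>w. f w * g w)"
  by (rule Bochner_Integration.integrable_bound[where f="\<lambda>w. (f w)\<^sup>2 + (g w)\<^sup>2"])
     (use assms abs_mult_le_sq in auto)

lemma int_bounded_mult:
  fixes f h :: "'w \<Rightarrow> real"
  assumes "integrable M f" "h \<in> borel_measurable M" "\<And>w. \<bar>h w\<bar> \<le> C"
  shows "integrable M (\<lambda>w. h w * f w)"
proof (rule Bochner_Integration.integrable_bound[where f="\<lambda>w. C * f w"])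
  show "integrable M (\<lambda>w. C * f w)" using assms by simp
  show "(\<lambda>w. h w * f w) \<in> borel_measurable M"
    using assms borel_measurable_integrable by measurable
  have "\<bar>h w * f w\<bar> \<le> \<bar>C * f w\<bar>" for w
    using assms(3)[of w] by (simp add: abs_mult mult_right_mono)
  then show "AE w in M. norm (h w * f w) \<le> norm (C * f w)" by simp
qed

lemma (in finite_measure) int_sq_shift:
  fixes f :: "'a \<Rightarrow> real"
  assumes "integrable M (\<lambda>w. (f w)\<^sup>2)" "f \<in> borel_measurable M"
  shows "integrable M (\<lambda>w. (f w - c)\<^sup>2)"
proof (rule Bochner_Integration.integrable_bound[where f="\<lambda>w. 2 * (f w)\<^sup>2 + 2 * c\<^sup>2"])
  show "integrable M (\<lambda>w. 2 * (f w)\<^sup>2 + 2 * c\<^sup>2)" using assms by simp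
  show "(\<lambda>w. (f w - c)\<^sup>2) \<in> borel_measurable M" using assms by measurable
  have "(a - c)\<^sup>2 \<le> 2 * a\<^sup>2 + 2 * c\<^sup>2" for a :: real
  proof -
    have "(a - c)\<^sup>2 = a\<^sup>2 + c\<^sup>2 - 2 * (a * c)" by (simp add: power2_eq_square algebra_simps)
    then show ?thesis using abs_mult_le_sq2[of a c] abs_ge_self[of "a*c"] abs_ge_minus_self[of "a*c"]
      by linarith
  qed
  then show "AE w in M. norm ((f w - c)\<^sup>2) \<le> norm (2 * (f w)\<^sup>2 + 2 * c\<^sup>2)" by simp
qed

lemma (in finite_measure) int_of_sq:
  fixes f :: "'a \<Rightarrow> real"
  assumes "integrable M (\<lambda>w. (f w)\<^sup>2)" "f \<in> borel_measurable M"
  shows "integrable M f"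
proof (rule Bochner_Integration.integrable_bound[where f="\<lambda>w. 1 + (f w)\<^sup>2"])
  show "integrable M (\<lambda>w. 1 + (f w)\<^sup>2)" using assms by simp
  show "f \<in> borel_measurable M" by fact
  have "\<bar>a\<bar> \<le> 1 + a\<^sup>2" for a :: real
    using abs_mult_le_sq[of a 1] by simp
  then show "AE w in M. norm (f w) \<le> norm (1 + (f w)\<^sup>2)" by simp
qed




locale adept = prob_space M for M :: "'w measure" +
  fixes A1 A2 :: "'w \<Rightarrow> real" and R :: "'w \<Rightarrow> bool"
    and Ypot :: "dtr \<Rightarrow> 'w \<Rightarrow> real^'m" and Y :: "'w \<Rightarrow> real^'m"
    and \<beta> :: "dtr \<Rightarrow> real"
  assumes meas_A1[measurable]: "A1 \<in> borel_measurable M" and meas_A2[measurable]: "A2 \<in> borel_measurable M"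
    and meas_R: "R \<in> measurable M (count_space UNIV)"
    and meas_Ypot[measurable]: "\<And>d. Ypot d \<in> borel_measurable M"
    and sq_int: "\<And>d j. integrable M (\<lambda>w. (Ypot d w $ j)\<^sup>2)"
    and A1_vals: "\<And>w. A1 w = 1 \<or> A1 w = -1"
    and A2_vals: "\<And>w. A2 w = 1 \<or> A2 w = -1"
    and A1_prob: "measure M {w\<in>space M. A1 w = 1} = 1/2"
    and A2_prob: "measure M {w\<in>space M. A2 w = 1} = 1/2"
    and indep1: "prob_space.indep_set M (sets (vimage_algebra (space M) A1 borel))
         (sets (vimage_algebra (space M)
         (\<lambda>w. (A2 w, R w, Ypot DTR_1_1 w, Ypot DTR_1_m1 w, Ypot DTR_m1 w)) (borel \<Otimes>\<^sub>M count_space UNIV \<Otimes>\<^sub>M borel \<Otimes>\<^sub>M borel \<Otimes>\<^sub>M borel)))"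
    and indep2: "prob_space.indep_set M (sets (vimage_algebra (space M) A2 borel))
         (sets (vimage_algebra (space M)
         (\<lambda>w. (R w, Ypot DTR_1_1 w, Ypot DTR_1_m1 w, Ypot DTR_m1 w)) (count_space UNIV \<Otimes>\<^sub>M borel \<Otimes>\<^sub>M borel \<Otimes>\<^sub>M borel)))"
    and consistency: "\<And>d w. consist A1 R A2 d w = 1 \<Longrightarrow> Y w = Ypot d w"
begin

lemmas pred_R[measurable] = meas_R

lemma pred_A1[measurable]: "(\<lambda>w. A1 w = c) \<in> measurable M (count_space (UNIV::bool set))"
  using pred_eq_const1[OF meas_A1, of c] by simp
lemma pred_A2[measurable]: "(\<lambda>w. A2 w = c) \<in> measurable M (count_space (UNIV::bool set))"
  using pred_eq_const1[OF meas_A2, of c] by simp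

lemma meas_consist[measurable]: "consist A1 R A2 d \<in> borel_measurable M"
  unfolding consist_def by (cases d) simp_all

lemma meas_weight[measurable]: "weight A1 R \<in> borel_measurable M"
  unfolding weight_def by measurable

lemma meas_comp[measurable]: "(\<lambda>w. Ypot d w $ j) \<in> borel_measurable M"
  by (rule measurable_compose[OF meas_Ypot borel_measurable_continuous_onI]) (intro continuous_intros)

lemma rv1: "random_variable (borel \<Otimes>\<^sub>M count_space UNIV \<Otimes>\<^sub>M borel \<Otimes>\<^sub>M borel \<Otimes>\<^sub>M borel)
   (\<lambda>w. (A2 w, R w, Ypot DTR_1_1 w, Ypot DTR_1_m1 w, Ypot DTR_m1 w))"
  using meas_R by measurable

lemma rv2: "random_variable (count_space UNIV \<Otimes>\<^sub>M borel \<Otimes>\<^sub>M borel \<Otimes>\<^sub>M borel)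
   (\<lambda>w. (R w, Ypot DTR_1_1 w, Ypot DTR_1_m1 w, Ypot DTR_m1 w))"
  using meas_R by measurable

end



context adept begin

definition S :: "dtr \<Rightarrow> 'w \<Rightarrow> real" where
  "S d w = (\<Sum>j\<in>UNIV. Ypot d w $ j - \<beta> d)"

definition IW :: "dtr \<Rightarrow> 'w \<Rightarrow> real" where
  "IW d w = consist A1 R A2 d w * weight A1 R w"

lemma meas_S[measurable]: "S d \<in> borel_measurable M"
  unfolding S_def by measurable

lemma meas_IW[measurable]: "IW d \<in> borel_measurable M"
  unfolding IW_def by measurable

lemma IW_bound: "\<bar>IW d w\<bar> \<le> 4"
  by (cases d) (auto simp: IW_def consist_def weight_def)

lemma consist_01: "consist A1 R A2 d w = 0 \<or> consist A1 R A2 d w = 1"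
  by (cases d) (auto simp: consist_def)

lemma int_X2: "integrable M (\<lambda>w. (Ypot d w $ j - c)\<^sup>2)"
  using int_sq_shift[OF sq_int meas_comp] .

lemma int_XX: "integrable M (\<lambda>w. (Ypot d w $ i - c) * (Ypot d' w $ j - c'))"
proof (rule int_mult_sq[OF int_X2 int_X2])
  show "(\<lambda>w. Ypot d w $ i - c) \<in> borel_measurable M" using meas_comp by (rule borel_measurable_diff) simp
  show "(\<lambda>w. Ypot d' w $ j - c') \<in> borel_measurable M" using meas_comp by (rule borel_measurable_diff) simp
qed

lemma int_SS: "integrable M (\<lambda>w. S d w * S d' w)"
proof -
  have "(\<lambda>w. S d w * S d' w) = (\<lambda>w. \<Sum>i\<in>UNIV. \<Sum>j\<in>UNIV. (Ypot d w $ i - \<beta> d) * (Ypot d' w $ j - \<beta> d'))"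
    by (simp add: S_def sum_product)
  then show ?thesis
    by (simp only:) (intro Bochner_Integration.integrable_sum int_XX)
qed

lemma int_S2: "integrable M (\<lambda>w. (S d w)\<^sup>2)"
  using int_SS[of d d] by (simp add: power2_eq_square)

lemma int_comp: "integrable M (\<lambda>w. Ypot d w $ j)"
  by (rule int_of_sq[OF sq_int]) measurable

lemma int_Ypot: "integrable M (Ypot d)"
  by (rule integrable_vec[OF int_comp])

lemma int_ind: "(\<lambda>w. if P w then 1 else 0 :: real) \<in> borel_measurable M \<Longrightarrow>
   integrable M (\<lambda>w. if P w then 1 else 0 :: real)"
  by (rule integrable_const_bound[where B=1]) auto

lemma int_ind_eq: "{w\<in>space M. P w} \<in> events \<Longrightarrow>
   (\<integral>w. (if P w then 1 else 0 :: real) \<partial>M) = prob {w\<in>space M. P w}"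
proof -
  assume ev: "{w\<in>space M. P w} \<in> events"
  have "(\<integral>w. (if P w then 1 else 0 :: real) \<partial>M) = (\<integral>w. indicator {w\<in>space M. P w} w \<partial>M)"
    by (rule Bochner_Integration.integral_cong) (auto simp: indicator_def)
  also have "\<dots> = prob {w\<in>space M. P w}" using ev by (simp add: Int_absorb2 sets.sets_into_space)
  finally show ?thesis .
qed

lemma indep_var_from_set:
  assumes ind: "indep_set (sets (vimage_algebra (space M) XX SS)) (sets (vimage_algebra (space M) YY TT))"
    and XX: "XX \<in> measurable M SS" and YY: "YY \<in> measurable M TT"
    and f: "f \<in> measurable SS N" and g: "g \<in> measurable TT N"
  shows "indep_var N (\<lambda>w. f (XX w)) N (\<lambda>w. g (YY w))"
proof -
  have sub: "sigma_sets (space M) {(\<lambda>w. h (Z w)) -` A \<inter> space M | A. A \<in> sets N}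
      \<subseteq> sets (vimage_algebra (space M) Z Q)"
    if Z: "Z \<in> measurable M Q" and h: "h \<in> measurable Q N" for Z :: "'w \<Rightarrow> 'x" and Q h
  proof -
    have "{(\<lambda>w. h (Z w)) -` A \<inter> space M | A. A \<in> sets N} \<subseteq> {Z -` B \<inter> space M | B. B \<in> sets Q}"
    proof safe
      fix A assume A: "A \<in> sets N"
      have "(\<lambda>w. h (Z w)) -` A \<inter> space M = Z -` (h -` A \<inter> space Q) \<inter> space M"
        using measurable_space[OF Z] by auto
      moreover have "h -` A \<inter> space Q \<in> sets Q" using measurable_sets[OF h A] .
      ultimately show "\<exists>B. (\<lambda>w. h (Z w)) -` A \<inter> space M = Z -` B \<inter> space M \<and> B \<in> sets Q" by blast
    qed
    then show ?thesis unfolding sets_vimage_algebra by (rule sigma_sets_subseteq)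
  qed
  have "indep_sets (case_bool (sigma_sets (space M) {(\<lambda>w. f (XX w)) -` A \<inter> space M | A. A \<in> sets N})
                              (sigma_sets (space M) {(\<lambda>w. g (YY w)) -` A \<inter> space M | A. A \<in> sets N})) UNIV"
    using ind unfolding indep_set_def
    by (rule indep_sets_mono_sets) (use sub[OF XX f] sub[OF YY g] in \<open>auto split: bool.split\<close>)
  moreover have "random_variable N (\<lambda>w. f (XX w))" "random_variable N (\<lambda>w. g (YY w))"
    using measurable_compose[OF XX f] measurable_compose[OF YY g] by auto
  ultimately show ?thesis unfolding indep_var_eq indep_set_def by auto
qed

abbreviation "N1 \<equiv> (borel \<Otimes>\<^sub>M count_space UNIV \<Otimes>\<^sub>M borel \<Otimes>\<^sub>M borel \<Otimes>\<^sub>M borel ::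
   (real \<times> bool \<times> (real^'m) \<times> (real^'m) \<times> (real^'m)) measure)"

lemma indep_var1: "indep_var N1 (\<lambda>w. (A1 w, True, 0, 0, 0)) N1
   (\<lambda>w. (A2 w, R w, Ypot DTR_1_1 w, Ypot DTR_1_m1 w, Ypot DTR_m1 w))"
proof -
  have "indep_var N1 (\<lambda>w. (\<lambda>a. (a, True, 0, 0, 0)) (A1 w)) N1
     (\<lambda>w. id (A2 w, R w, Ypot DTR_1_1 w, Ypot DTR_1_m1 w, Ypot DTR_m1 w))"
    by (rule indep_var_from_set[OF indep1 meas_A1 rv1]) measurable
  then show ?thesis by simp
qed

lemma indep_var2: "indep_var N1 (\<lambda>w. (A2 w, True, 0, 0, 0)) N1
   (\<lambda>w. (0, R w, Ypot DTR_1_1 w, Ypot DTR_1_m1 w, Ypot DTR_m1 w))"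
proof -
  have "indep_var N1 (\<lambda>w. (\<lambda>a. (a, True, 0, 0, 0)) (A2 w)) N1
     (\<lambda>w. (\<lambda>x. (0, x)) (R w, Ypot DTR_1_1 w, Ypot DTR_1_m1 w, Ypot DTR_m1 w))"
    by (rule indep_var_from_set[OF indep2 meas_A2 rv2]) measurable
  then show ?thesis by simp
qed

lemma prob_A1: "c = 1 \<or> c = -1 \<Longrightarrow> prob {w\<in>space M. A1 w = c} = 1/2"
proof -
  assume c: "c = 1 \<or> c = -1"
  have "{w\<in>space M. A1 w = -1} = space M - {w\<in>space M. A1 w = 1}" using A1_vals by force
  then have "prob {w\<in>space M. A1 w = -1} = 1 - 1/2"
    using prob_compl[of "{w\<in>space M. A1 w = 1}"] A1_prob by simp
  then show ?thesis using c A1_prob by auto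
qed

lemma prob_A2: "c = 1 \<or> c = -1 \<Longrightarrow> prob {w\<in>space M. A2 w = c} = 1/2"
proof -
  assume c: "c = 1 \<or> c = -1"
  have "{w\<in>space M. A2 w = -1} = space M - {w\<in>space M. A2 w = 1}" using A2_vals by force
  then have "prob {w\<in>space M. A2 w = -1} = 1 - 1/2"
    using prob_compl[of "{w\<in>space M. A2 w = 1}"] A2_prob by simp
  then show ?thesis using c A2_prob by auto
qed

lemma E_A1:
  fixes \<Phi> :: "_ \<Rightarrow> real"
  assumes "\<Phi> \<in> borel_measurable N1"
    and "integrable M (\<lambda>w. \<Phi> (A2 w, R w, Ypot DTR_1_1 w, Ypot DTR_1_m1 w, Ypot DTR_m1 w))"
    and "c = 1 \<or> c = -1"
  shows "(\<integral>w. (if A1 w = c then 1 else 0) * \<Phi> (A2 w, R w, Ypot DTR_1_1 w, Ypot DTR_1_m1 w, Ypot DTR_m1 w) \<partial>M)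
    = 1/2 * (\<integral>w. \<Phi> (A2 w, R w, Ypot DTR_1_1 w, Ypot DTR_1_m1 w, Ypot DTR_m1 w) \<partial>M)"
proof -
  have m: "(\<lambda>x. if fst x = c then 1 else 0 :: real) \<in> borel_measurable N1" by measurable
  have iv: "indep_var borel (\<lambda>w. if A1 w = c then 1 else 0 :: real) borel
      (\<lambda>w. \<Phi> (A2 w, R w, Ypot DTR_1_1 w, Ypot DTR_1_m1 w, Ypot DTR_m1 w))"
    using indep_var_compose[OF indep_var1 m assms(1)] by (simp add: comp_def)
  have "(\<integral>w. (if A1 w = c then 1 else 0) * \<Phi> (A2 w, R w, Ypot DTR_1_1 w, Ypot DTR_1_m1 w, Ypot DTR_m1 w) \<partial>M)
     = (\<integral>w. (if A1 w = c then 1 else 0::real) \<partial>M) * (\<integral>w. \<Phi> (A2 w, R w, Ypot DTR_1_1 w, Ypot DTR_1_m1 w, Ypot DTR_m1 w) \<partial>M)"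
    by (rule indep_var_lebesgue_integral[OF iv int_ind assms(2)]) measurable
  also have "(\<integral>w. (if A1 w = c then 1 else 0::real) \<partial>M) = 1/2"
    using int_ind_eq[of "\<lambda>w. A1 w = c"] prob_A1[OF assms(3)] by simp
  finally show ?thesis .
qed

lemma E_A2:
  fixes \<Phi> :: "_ \<Rightarrow> real"
  assumes "\<Phi> \<in> borel_measurable (count_space UNIV \<Otimes>\<^sub>M borel \<Otimes>\<^sub>M borel \<Otimes>\<^sub>M borel)"
    and "integrable M (\<lambda>w. \<Phi> (R w, Ypot DTR_1_1 w, Ypot DTR_1_m1 w, Ypot DTR_m1 w))"
    and "c = 1 \<or> c = -1"
  shows "(\<integral>w. (if A2 w = c then 1 else 0) * \<Phi> (R w, Ypot DTR_1_1 w, Ypot DTR_1_m1 w, Ypot DTR_m1 w) \<partial>M)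
    = 1/2 * (\<integral>w. \<Phi> (R w, Ypot DTR_1_1 w, Ypot DTR_1_m1 w, Ypot DTR_m1 w) \<partial>M)"
proof -
  have m: "(\<lambda>x. if fst x = c then 1 else 0 :: real) \<in> borel_measurable N1" by measurable
  have m2: "(\<lambda>x. \<Phi> (snd x)) \<in> borel_measurable N1" using assms(1) by measurable
  have iv: "indep_var borel (\<lambda>w. if A2 w = c then 1 else 0 :: real) borel
      (\<lambda>w. \<Phi> (R w, Ypot DTR_1_1 w, Ypot DTR_1_m1 w, Ypot DTR_m1 w))"
    using indep_var_compose[OF indep_var2 m m2] by (simp add: comp_def)
  have "(\<integral>w. (if A2 w = c then 1 else 0) * \<Phi> (R w, Ypot DTR_1_1 w, Ypot DTR_1_m1 w, Ypot DTR_m1 w) \<partial>M)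
     = (\<integral>w. (if A2 w = c then 1 else 0::real) \<partial>M) * (\<integral>w. \<Phi> (R w, Ypot DTR_1_1 w, Ypot DTR_1_m1 w, Ypot DTR_m1 w) \<partial>M)"
    by (rule indep_var_lebesgue_integral[OF iv int_ind assms(2)]) measurable
  also have "(\<integral>w. (if A2 w = c then 1 else 0::real) \<partial>M) = 1/2"
    using int_ind_eq[of "\<lambda>w. A2 w = c"] prob_A2[OF assms(3)] by simp
  finally show ?thesis .
qed

end



context adept begin

lemma Ysel: "Ypot (dtr1 b) w = (if b = 1 then Ypot DTR_1_1 w else Ypot DTR_1_m1 w)"
  by (simp add: dtr1_def)

lemma int_indmult:
  fixes f :: "'w \<Rightarrow> real"
  assumes "integrable M f" "(\<lambda>w. P w) \<in> measurable M (count_space (UNIV::bool set))"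
  shows "integrable M (\<lambda>w. (if P w then 1 else 0) * f w)"
proof (rule int_bounded_mult[OF assms(1), where C=1])
  have [measurable]: "(\<lambda>w. P w) \<in> measurable M (count_space (UNIV::bool set))" by fact
  show "(\<lambda>w. if P w then 1 else 0 :: real) \<in> borel_measurable M" by measurable
qed auto

lemma key1:
  fixes g :: "real^'m \<Rightarrow> real"
  assumes b: "b = 1 \<or> b = -1" and g[measurable]: "g \<in> borel_measurable borel"
    and gi: "integrable M (\<lambda>w. g (Ypot (dtr1 b) w))"
  shows "(\<integral>w. (if A1 w = 1 then 1 else 0) * ((a * (if R w then 1 else 0) + c * (if \<not> R w \<and> A2 w = b then 1 else 0)) * g (Ypot (dtr1 b) w)) \<partial>M)
    = 1/2 * (a * (\<integral>w. (if R w then 1 else 0) * g (Ypot (dtr1 b) w) \<partial>M)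
             + c/2 * (\<integral>w. (if \<not> R w then 1 else 0) * g (Ypot (dtr1 b) w) \<partial>M))"
proof -
  define sel :: "real \<times> bool \<times> (real^'m) \<times> (real^'m) \<times> (real^'m) \<Rightarrow> real^'m"
    where "sel x = (if b = 1 then fst (snd (snd x)) else fst (snd (snd (snd x))))" for x
  define \<Phi>1 where "\<Phi>1 x = (a * (if fst (snd x) then 1 else 0) + c * (if \<not> fst (snd x) \<and> fst x = b then 1 else 0)) * g (sel x)" for x
  define sel2 :: "bool \<times> (real^'m) \<times> (real^'m) \<times> (real^'m) \<Rightarrow> real^'m"
    where "sel2 y = (if b = 1 then fst (snd y) else fst (snd (snd y)))" for y
  define \<Phi>2 where "\<Phi>2 y = (if \<not> fst y then 1 else 0) * g (sel2 y)" for y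
  have msel[measurable]: "sel \<in> measurable N1 borel" unfolding sel_def by measurable
  have msel2[measurable]: "sel2 \<in> measurable (count_space UNIV \<Otimes>\<^sub>M borel \<Otimes>\<^sub>M borel \<Otimes>\<^sub>M borel) borel"
    unfolding sel2_def by measurable
  have m1: "\<Phi>1 \<in> borel_measurable N1" unfolding \<Phi>1_def by measurable
  have m2: "\<Phi>2 \<in> borel_measurable (count_space UNIV \<Otimes>\<^sub>M borel \<Otimes>\<^sub>M borel \<Otimes>\<^sub>M borel)" unfolding \<Phi>2_def by measurable
  let ?G = "\<lambda>w. g (Ypot (dtr1 b) w)"
  have e1: "\<Phi>1 (A2 w, R w, Ypot DTR_1_1 w, Ypot DTR_1_m1 w, Ypot DTR_m1 w)
      = a * ((if R w then 1 else 0) * ?G w) + c * ((if \<not> R w \<and> A2 w = b then 1 else 0) * ?G w)" for w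
    by (simp add: \<Phi>1_def sel_def Ysel algebra_simps)
  have e2: "\<Phi>2 (R w, Ypot DTR_1_1 w, Ypot DTR_1_m1 w, Ypot DTR_m1 w) = (if \<not> R w then 1 else 0) * ?G w" for w
    by (simp add: \<Phi>2_def sel2_def Ysel)
  have iR: "integrable M (\<lambda>w. (if R w then 1 else 0) * ?G w)" by (rule int_indmult[OF gi]) measurable
  have inR: "integrable M (\<lambda>w. (if \<not> R w then 1 else 0) * ?G w)" by (rule int_indmult[OF gi]) measurable
  have inRb: "integrable M (\<lambda>w. (if \<not> R w \<and> A2 w = b then 1 else 0) * ?G w)" by (rule int_indmult[OF gi]) measurable
  have i1: "integrable M (\<lambda>w. \<Phi>1 (A2 w, R w, Ypot DTR_1_1 w, Ypot DTR_1_m1 w, Ypot DTR_m1 w))"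
    unfolding e1 using iR inRb by simp
  have i2: "integrable M (\<lambda>w. \<Phi>2 (R w, Ypot DTR_1_1 w, Ypot DTR_1_m1 w, Ypot DTR_m1 w))"
    unfolding e2 using inR by simp
  have "(\<integral>w. (if A1 w = 1 then 1 else 0) * ((a * (if R w then 1 else 0) + c * (if \<not> R w \<and> A2 w = b then 1 else 0)) * g (Ypot (dtr1 b) w)) \<partial>M)
      = (\<integral>w. (if A1 w = 1 then 1 else 0) * \<Phi>1 (A2 w, R w, Ypot DTR_1_1 w, Ypot DTR_1_m1 w, Ypot DTR_m1 w) \<partial>M)"
    by (simp add: e1 algebra_simps)
  also have "\<dots> = 1/2 * (\<integral>w. \<Phi>1 (A2 w, R w, Ypot DTR_1_1 w, Ypot DTR_1_m1 w, Ypot DTR_m1 w) \<partial>M)"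
    by (rule E_A1[OF m1 i1]) simp
  also have "(\<integral>w. \<Phi>1 (A2 w, R w, Ypot DTR_1_1 w, Ypot DTR_1_m1 w, Ypot DTR_m1 w) \<partial>M)
      = a * (\<integral>w. (if R w then 1 else 0) * ?G w \<partial>M) + c * (\<integral>w. (if \<not> R w \<and> A2 w = b then 1 else 0) * ?G w \<partial>M)"
    unfolding e1 using iR inRb by simp
  also have "(\<integral>w. (if \<not> R w \<and> A2 w = b then 1 else 0) * ?G w \<partial>M)
      = (\<integral>w. (if A2 w = b then 1 else 0) * \<Phi>2 (R w, Ypot DTR_1_1 w, Ypot DTR_1_m1 w, Ypot DTR_m1 w) \<partial>M)"
    by (rule Bochner_Integration.integral_cong) (auto simp: e2)
  also have "\<dots> = 1/2 * (\<integral>w. \<Phi>2 (R w, Ypot DTR_1_1 w, Ypot DTR_1_m1 w, Ypot DTR_m1 w) \<partial>M)"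
    by (rule E_A2[OF m2 i2 b])
  finally show ?thesis by (simp add: e2 algebra_simps)
qed

end



lemma Dmat_vec: "(transpose (Dmat d' :: real^dtr^'m) *v z) $ d = (if d = d' then ones \<bullet> z else 0)"
  by (simp add: matrix_vector_mult_def transpose_def Dmat_def ones_inner)

lemma K_entry: "(transpose (Dmat d :: real^dtr^'m) ** (Vi::real^'m^'m) ** Dmat d) $ a $ b
   = (if a = d \<and> b = d then (\<Sum>i\<in>UNIV. \<Sum>j\<in>UNIV. Vi $ i $ j) else 0)"
  by (auto simp add: matrix_matrix_mult_def transpose_def Dmat_def sum_if_const if_distrib cong: if_cong intro: sum.swap)

lemma ifmult1: "(c * (if P then 1 else 0)) * (x::real) = (if P then c * x else 0)" by simp
lemma ifmult2: "x * (c * (if P then 1 else 0)) = (if P then x * c else (0::real))" by simp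

lemma smat_mult_left: "((c::real) *\<^sub>R mat 1) ** (X::real^'n^'n) = c *\<^sub>R X"
  by (simp add: vec_eq_iff matrix_matrix_mult_def mat_def ifmult1 del: mult_zero_right mult_zero_left)

lemma smat_mult_right: "(X::real^'n^'n) ** ((c::real) *\<^sub>R mat 1) = c *\<^sub>R X"
  by (simp add: vec_eq_iff matrix_matrix_mult_def mat_def ifmult2 del: mult_zero_right mult_zero_left)

lemma matrix_inv_smat:
  assumes "(c::real) \<noteq> 0"
  shows "matrix_inv (c *\<^sub>R (mat 1 :: real^'n^'n)) = (1/c) *\<^sub>R mat 1"
proof -
  let ?A = "c *\<^sub>R (mat 1 :: real^'n^'n)"
  have ex: "\<exists>A'. ?A ** A' = mat 1 \<and> A' ** ?A = mat 1"
    by (rule exI[of _ "(1/c) *\<^sub>R mat 1"]) (use assms in \<open>simp add: smat_mult_left\<close>)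
  have "?A ** matrix_inv ?A = mat 1" unfolding matrix_inv_def by (rule someI_ex[OF ex, THEN conjunct1])
  then have "(1/c) *\<^sub>R (?A ** matrix_inv ?A) = (1/c) *\<^sub>R mat 1" by simp
  then show ?thesis using assms by (simp add: smat_mult_left)
qed




context adept begin

lemma IW_d1: "b = 1 \<or> b = -1 \<Longrightarrow> IW (dtr1 b) w = (if A1 w = 1 then 1 else 0) * ((2 * (if R w then 1 else 0) + 4 * (if \<not> R w \<and> A2 w = b then 1 else 0)) * 1)"
  by (auto simp: IW_def consist_def weight_def dtr1_def)

lemma IW_m1: "IW DTR_m1 w = 2 * (if A1 w = -1 then 1 else 0)"
  by (auto simp: IW_def consist_def weight_def)

lemma int_R_split: fixes f :: "'w \<Rightarrow> real" shows "integrable M f \<Longrightarrow>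
  (\<integral>w. (if R w then 1 else 0) * f w \<partial>M) + (\<integral>w. (if \<not> R w then 1 else 0) * f w \<partial>M) = (\<integral>w. f w \<partial>M)"
proof -
  assume f: "integrable M f"
  have "(\<integral>w. (if R w then 1 else 0) * f w \<partial>M) + (\<integral>w. (if \<not> R w then 1 else 0) * f w \<partial>M)
     = (\<integral>w. (if R w then 1 else 0) * f w + (if \<not> R w then 1 else 0) * f w \<partial>M)"
    by (rule Bochner_Integration.integral_add[symmetric]; rule int_indmult[OF f]; measurable)
  also have "\<dots> = (\<integral>w. f w \<partial>M)" by (rule Bochner_Integration.integral_cong) auto
  finally show ?thesis .
qed

lemma E_IW_d1: assumes b: "b = 1 \<or> b = -1" shows "(\<integral>w. IW (dtr1 b) w \<partial>M) = 1"
proof -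
  have "(\<integral>w. IW (dtr1 b) w \<partial>M) = (\<integral>w. (if A1 w = 1 then 1 else 0) * ((2 * (if R w then 1 else 0) + 4 * (if \<not> R w \<and> A2 w = b then 1 else 0)) * (\<lambda>_. 1) (Ypot (dtr1 b) w)) \<partial>M)"
    using IW_d1[OF b] by simp
  also have "\<dots> = 1/2 * (2 * (\<integral>w. (if R w then 1 else 0) * (\<lambda>_. 1) (Ypot (dtr1 b) w) \<partial>M)
             + 4/2 * (\<integral>w. (if \<not> R w then 1 else 0) * (\<lambda>_. 1) (Ypot (dtr1 b) w) \<partial>M))"
    by (rule key1[OF b]) auto
  also have "\<dots> = (\<integral>w. (if R w then 1 else 0) * 1 \<partial>M) + (\<integral>w. (if \<not> R w then 1 else 0) * 1 \<partial>M)"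
    by simp
  also have "\<dots> = (\<integral>w. 1 \<partial>M)" by (rule int_R_split) simp
  finally show ?thesis by (simp add: prob_space)
qed

lemma E_IW: "(\<integral>w. IW d w \<partial>M) = 1"
proof (cases d)
  case DTR_1_1
  then have "d = dtr1 1" by (simp add: dtr1_def)
  then show ?thesis using E_IW_d1[of 1] by simp
next
  case DTR_1_m1
  then have "d = dtr1 (-1)" by (simp add: dtr1_def)
  then show ?thesis using E_IW_d1[of "-1"] by simp
next
  case DTR_m1
  have "(\<integral>w. IW d w \<partial>M) = 2 * (\<integral>w. (if A1 w = -1 then 1 else 0) \<partial>M)"
    using DTR_m1 by (simp add: IW_m1)
  also have "\<dots> = 1" using int_ind_eq[of "\<lambda>w. A1 w = -1"] prob_A1[of "-1"] by simp
  finally show ?thesis .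
qed

lemma g_meas[measurable]: "(\<lambda>y::real^'m. (\<Sum>j\<in>UNIV. y $ j - c)\<^sup>2) \<in> borel_measurable borel"
  by (rule borel_measurable_continuous_onI) (intro continuous_intros)

lemma S_sq: "(S d w)\<^sup>2 = (\<lambda>y. (\<Sum>j\<in>UNIV. y $ j - \<beta> d)\<^sup>2) (Ypot d w)"
  by (simp add: S_def)

lemma E_IW2_d1: assumes b: "b = 1 \<or> b = -1"
  shows "(\<integral>w. (IW (dtr1 b) w * S (dtr1 b) w)\<^sup>2 \<partial>M)
     = 2 * (\<integral>w. (S (dtr1 b) w)\<^sup>2 \<partial>M) + 2 * (\<integral>w. (if \<not> R w then 1 else 0) * (S (dtr1 b) w)\<^sup>2 \<partial>M)"
proof -
  let ?g = "\<lambda>y::real^'m. (\<Sum>j\<in>UNIV. y $ j - \<beta> (dtr1 b))\<^sup>2"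
  have gi: "integrable M (\<lambda>w. ?g (Ypot (dtr1 b) w))" using int_S2[of "dtr1 b"] by (simp add: S_def)
  have "(\<integral>w. (IW (dtr1 b) w * S (dtr1 b) w)\<^sup>2 \<partial>M) = (\<integral>w. (if A1 w = 1 then 1 else 0) * ((4 * (if R w then 1 else 0) + 16 * (if \<not> R w \<and> A2 w = b then 1 else 0)) * ?g (Ypot (dtr1 b) w)) \<partial>M)"
    by (rule Bochner_Integration.integral_cong) (auto simp: IW_d1[OF b] power_mult_distrib S_def)
  also have "\<dots> = 1/2 * (4 * (\<integral>w. (if R w then 1 else 0) * ?g (Ypot (dtr1 b) w) \<partial>M)
             + 16/2 * (\<integral>w. (if \<not> R w then 1 else 0) * ?g (Ypot (dtr1 b) w) \<partial>M))"
    by (rule key1[OF b _ gi]) simp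
  also have "\<dots> = 2 * ((\<integral>w. (if R w then 1 else 0) * ?g (Ypot (dtr1 b) w) \<partial>M) + (\<integral>w. (if \<not> R w then 1 else 0) * ?g (Ypot (dtr1 b) w) \<partial>M))
       + 2 * (\<integral>w. (if \<not> R w then 1 else 0) * ?g (Ypot (dtr1 b) w) \<partial>M)"
    by (simp add: algebra_simps)
  also have "(\<integral>w. (if R w then 1 else 0) * ?g (Ypot (dtr1 b) w) \<partial>M) + (\<integral>w. (if \<not> R w then 1 else 0) * ?g (Ypot (dtr1 b) w) \<partial>M)
      = (\<integral>w. ?g (Ypot (dtr1 b) w) \<partial>M)" by (rule int_R_split[OF gi])
  finally show ?thesis by (simp add: S_def)
qed

lemma E_IW2_m1:
  shows "(\<integral>w. (IW DTR_m1 w * S DTR_m1 w)\<^sup>2 \<partial>M) = 2 * (\<integral>w. (S DTR_m1 w)\<^sup>2 \<partial>M)"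
proof -
  define \<Phi> :: "real \<times> bool \<times> (real^'m) \<times> (real^'m) \<times> (real^'m) \<Rightarrow> real"
    where "\<Phi> x = 4 * (\<Sum>j\<in>UNIV. snd (snd (snd (snd x))) $ j - \<beta> DTR_m1)\<^sup>2" for x
  have m: "\<Phi> \<in> borel_measurable N1"
  proof -
    have "(\<lambda>x. 4 * (\<lambda>y::real^'m. (\<Sum>j\<in>UNIV. y $ j - \<beta> DTR_m1)\<^sup>2) (snd (snd (snd (snd x))))) \<in> borel_measurable N1"
      by measurable
    then show ?thesis by (simp add: \<Phi>_def[abs_def])
  qed
  have e: "\<Phi> (A2 w, R w, Ypot DTR_1_1 w, Ypot DTR_1_m1 w, Ypot DTR_m1 w) = 4 * (S DTR_m1 w)\<^sup>2" for w
    by (simp add: \<Phi>_def S_def)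
  have i: "integrable M (\<lambda>w. \<Phi> (A2 w, R w, Ypot DTR_1_1 w, Ypot DTR_1_m1 w, Ypot DTR_m1 w))"
    unfolding e using int_S2 by simp
  have "(\<integral>w. (IW DTR_m1 w * S DTR_m1 w)\<^sup>2 \<partial>M) = (\<integral>w. (if A1 w = -1 then 1 else 0) * \<Phi> (A2 w, R w, Ypot DTR_1_1 w, Ypot DTR_1_m1 w, Ypot DTR_m1 w) \<partial>M)"
    by (rule Bochner_Integration.integral_cong) (auto simp: IW_m1 e power_mult_distrib)
  also have "\<dots> = 1/2 * (\<integral>w. \<Phi> (A2 w, R w, Ypot DTR_1_1 w, Ypot DTR_1_m1 w, Ypot DTR_m1 w) \<partial>M)"
    by (rule E_A1[OF m i]) simp
  finally show ?thesis unfolding e by simp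
qed

end



lemma ones_nth[simp]: "(ones::real^'m) $ j = 1" by (simp add: ones_def)
lemma ones_ones: "(ones::real^'m) \<bullet> ones = real CARD('m)" by (simp add: inner_vec_def)

context adept begin

lemma int_IW: "integrable M (IW d)"
  by (rule integrable_const_bound[where B=4]) (auto simp: IW_bound)

lemma Jmat_eq: fixes V :: "real^'m^'m" shows "Jmat M A1 R A2 V = (ones \<bullet> (matrix_inv V *v ones)) *\<^sub>R mat 1"
proof -
  let ?K = "\<lambda>d. transpose (Dmat d :: real^dtr^'m) ** matrix_inv V ** Dmat d"
  have "Jmat M A1 R A2 V = (\<integral>w. (\<Sum>d\<in>UNIV. IW d w *\<^sub>R ?K d) \<partial>M)"
    by (simp add: Jmat_def IW_def)
  also have "\<dots> = (\<Sum>d\<in>UNIV. (\<integral>w. IW d w *\<^sub>R ?K d \<partial>M))"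
    by (rule Bochner_Integration.integral_sum) (simp add: int_IW)
  also have "\<dots> = (\<Sum>d\<in>UNIV. ?K d)" by (simp add: int_IW E_IW)
  also have "\<dots> = (ones \<bullet> (matrix_inv V *v ones)) *\<^sub>R mat 1"
  proof -
    have "(\<Sum>d\<in>UNIV. ?K d) $ a $ b = ((\<Sum>i\<in>UNIV. \<Sum>j\<in>UNIV. matrix_inv V $ i $ j) *\<^sub>R (mat 1::real^dtr^dtr)) $ a $ b" for a b
      by (cases a; cases b) (simp_all add: sum_component K_entry mat_def UNIV_dtr)
    then show ?thesis unfolding ones_quad by (simp add: vec_eq_iff)
  qed
  finally show ?thesis .
qed

lemma Ufun_comp:
  fixes V :: "real^'m^'m"
  assumes Vi: "\<And>v. ones \<bullet> (matrix_inv V *v v) = (ones \<bullet> v) / lam"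
  shows "Ufun A1 R A2 Y V \<beta> w $ d = IW d w * S d w / lam"
proof -
  have "Ufun A1 R A2 Y V \<beta> w $ d = IW d w * (ones \<bullet> (matrix_inv V *v (Y w - \<beta> d *\<^sub>R ones)))"
    by (simp add: Ufun_def sum_component Dmat_vec IW_def[symmetric] if_distrib cong: if_cong del: transpose_matrix_vector)
  also have "\<dots> = IW d w * (ones \<bullet> (Y w - \<beta> d *\<^sub>R ones)) / lam" by (simp add: Vi)
  also have "IW d w * (ones \<bullet> (Y w - \<beta> d *\<^sub>R ones)) = IW d w * S d w"
  proof (cases "consist A1 R A2 d w = 1")
    case True
    then show ?thesis using consistency[OF True] by (simp add: ones_inner S_def)
  next
    case False
    then have "IW d w = 0" using consist_01[of d w] by (simp add: IW_def)
    then show ?thesis by simp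
  qed
  finally show ?thesis .
qed

lemma Amat_dd:
  fixes V :: "real^'m^'m"
  assumes Vi: "\<And>v. ones \<bullet> (matrix_inv V *v v) = (ones \<bullet> v) / lam"
  shows "Amat M A1 R A2 Y V \<beta> $ d $ d = (\<integral>w. (IW d w * S d w)\<^sup>2 \<partial>M) / lam\<^sup>2"
proof -
  let ?U = "Ufun A1 R A2 Y V \<beta>"
  have ent: "outer (?U w) (?U w) $ i $ j = (IW i w * IW j w / lam\<^sup>2) * (S i w * S j w)" for w i j
    by (simp add: outer_def Ufun_comp[OF Vi] power2_eq_square)
  have "integrable M (\<lambda>w. outer (?U w) (?U w))"
  proof (rule integrable_mat)
    fix i j
    have "integrable M (\<lambda>w. (IW i w * IW j w / lam\<^sup>2) * (S i w * S j w))"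
    proof (rule int_bounded_mult[OF int_SS, where C="16 / lam\<^sup>2"])
      show "(\<lambda>w. IW i w * IW j w / lam\<^sup>2) \<in> borel_measurable M" by measurable
      fix w
      have "\<bar>IW i w * IW j w\<bar> \<le> 4 * 4" unfolding abs_mult
        by (rule mult_mono) (auto simp: IW_bound)
      then show "\<bar>IW i w * IW j w / lam\<^sup>2\<bar> \<le> 16 / lam\<^sup>2"
        by (simp add: divide_right_mono)
    qed
    then show "integrable M (\<lambda>w. outer (?U w) (?U w) $ i $ j)" by (simp add: ent)
  qed
  then have "Amat M A1 R A2 Y V \<beta> $ d $ d = (\<integral>w. outer (?U w) (?U w) $ d $ d \<partial>M)"
    unfolding Amat_def by (rule integral_mat_nth)
  also have "\<dots> = (\<integral>w. (IW d w * S d w)\<^sup>2 / lam\<^sup>2 \<partial>M)"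
    by (simp add: ent power2_eq_square algebra_simps)
  finally show ?thesis by simp
qed

lemma tau2_eq:
  fixes V :: "real^'m^'m"
  assumes pd: "pos_def V" and Vo: "V *v ones = lam *\<^sub>R ones"
  shows "tau2 M A1 R A2 Y V \<beta> d = (\<integral>w. (IW d w * S d w)\<^sup>2 \<partial>M) / (real CARD('m))\<^sup>2"
proof -
  have lp: "0 < lam" and Vi: "\<And>v. ones \<bullet> (matrix_inv V *v v) = (ones \<bullet> v) / lam"
    using Vinv_facts[OF pd Vo] by auto
  have c: "ones \<bullet> (matrix_inv V *v ones) = real CARD('m) / lam"
    by (simp only: Vi ones_ones)
  have cne: "real CARD('m) / lam \<noteq> 0" using lp by simp
  have "tau2 M A1 R A2 Y V \<beta> d = ((1 / (real CARD('m) / lam)) *\<^sub>R ((1 / (real CARD('m) / lam)) *\<^sub>R Amat M A1 R A2 Y V \<beta>)) $ d $ d"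
    unfolding tau2_def Jmat_eq c matrix_inv_smat[OF cne] smat_mult_left smat_mult_right
    by (simp add: smat_mult_left smat_mult_right)
  also have "\<dots> = (\<integral>w. (IW d w * S d w)\<^sup>2 \<partial>M) / (real CARD('m))\<^sup>2"
    using lp by (simp add: Amat_dd[OF Vi] power2_eq_square field_simps)
  finally show ?thesis .
qed

end



context adept begin

lemma int_mean:
  assumes mean: "\<And>d j. (\<integral>w. Ypot d w $ j \<partial>M) = \<beta> d"
  shows "(\<integral>w. Ypot d w \<partial>M) = \<beta> d *\<^sub>R ones"
  by (simp add: vec_eq_iff integral_vec_nth[OF int_Ypot] mean)

lemma SS_expand: "(S d w)\<^sup>2 = (\<Sum>i\<in>UNIV. \<Sum>j\<in>UNIV. (Ypot d w $ i - \<beta> d) * (Ypot d w $ j - \<beta> d))"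
  by (simp add: S_def power2_eq_square sum_product del: sum_subtractf)

lemma covm_sum:
  assumes mean: "\<And>d j. (\<integral>w. Ypot d w $ j \<partial>M) = \<beta> d"
  shows "(\<Sum>i\<in>UNIV. \<Sum>j\<in>UNIV. covm M (Ypot d) $ i $ j) = (\<integral>w. (S d w)\<^sup>2 \<partial>M)"
proof -
  let ?e = "\<lambda>w. Ypot d w - \<beta> d *\<^sub>R ones"
  have ent: "outer (?e w) (?e w) $ i $ j = (Ypot d w $ i - \<beta> d) * (Ypot d w $ j - \<beta> d)" for w i j
    by (simp add: outer_def)
  have io: "integrable M (\<lambda>w. outer (?e w) (?e w))"
    by (rule integrable_mat) (simp add: ent int_XX)
  have "covm M (Ypot d) = (\<integral>w. outer (?e w) (?e w) \<partial>M)"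
    by (simp add: covm_def int_mean[OF mean])
  then have "(\<Sum>i\<in>UNIV. \<Sum>j\<in>UNIV. covm M (Ypot d) $ i $ j)
      = (\<Sum>i\<in>UNIV. \<Sum>j\<in>UNIV. (\<integral>w. (Ypot d w $ i - \<beta> d) * (Ypot d w $ j - \<beta> d) \<partial>M))"
    by (simp add: integral_mat_nth[OF io] ent)
  also have "\<dots> = (\<integral>w. (\<Sum>i\<in>UNIV. \<Sum>j\<in>UNIV. (Ypot d w $ i - \<beta> d) * (Ypot d w $ j - \<beta> d)) \<partial>M)"
    by (simp add: Bochner_Integration.integral_sum int_XX Bochner_Integration.integrable_sum del: sum_subtractf)
  also have "\<dots> = (\<integral>w. (S d w)\<^sup>2 \<partial>M)" by (simp add: SS_expand del: sum_subtractf)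
  finally show ?thesis .
qed

lemma cond_sum:
  "(\<Sum>i\<in>UNIV. \<Sum>j\<in>UNIV. cond_exp_ev M (\<lambda>w. \<not> R w)
      (\<lambda>w. outer (Ypot d w - \<beta> d *\<^sub>R ones) (Ypot d w - \<beta> d *\<^sub>R ones)) $ i $ j)
   = (\<integral>w. (if \<not> R w then 1 else 0) * (S d w)\<^sup>2 \<partial>M) / prob {w\<in>space M. \<not> R w}"
proof -
  let ?e = "\<lambda>w. Ypot d w - \<beta> d *\<^sub>R ones"
  let ?F = "\<lambda>w. if \<not> R w then outer (?e w) (?e w) else 0"
  have ent: "?F w $ i $ j = (if \<not> R w then 1 else 0) * ((Ypot d w $ i - \<beta> d) * (Ypot d w $ j - \<beta> d))" for w i j
    by (simp add: outer_def)
  have ii: "integrable M (\<lambda>w. (if \<not> R w then 1 else 0) * ((Ypot d w $ i - \<beta> d) * (Ypot d w $ j - \<beta> d)))" for i j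
    by (rule int_indmult[OF int_XX]) measurable
  have io: "integrable M ?F"
    by (rule integrable_mat) (simp only: ent ii)
  have "(\<Sum>i\<in>UNIV. \<Sum>j\<in>UNIV. cond_exp_ev M (\<lambda>w. \<not> R w) (\<lambda>w. outer (?e w) (?e w)) $ i $ j)
      = (\<Sum>i\<in>UNIV. \<Sum>j\<in>UNIV. (\<integral>w. (if \<not> R w then 1 else 0) * ((Ypot d w $ i - \<beta> d) * (Ypot d w $ j - \<beta> d)) \<partial>M)) / prob {w\<in>space M. \<not> R w}"
    by (simp add: cond_exp_ev_def integral_mat_nth[OF io] ent sum_divide_distrib divide_inverse sum_distrib_right mult.commute sum_distrib_left)
  also have "(\<Sum>i\<in>UNIV. \<Sum>j\<in>UNIV. (\<integral>w. (if \<not> R w then 1 else 0) * ((Ypot d w $ i - \<beta> d) * (Ypot d w $ j - \<beta> d)) \<partial>M))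
     = (\<integral>w. (\<Sum>i\<in>UNIV. \<Sum>j\<in>UNIV. (if \<not> R w then 1 else 0) * ((Ypot d w $ i - \<beta> d) * (Ypot d w $ j - \<beta> d))) \<partial>M)"
    by (simp add: Bochner_Integration.integral_sum ii Bochner_Integration.integrable_sum del: sum_subtractf)
  also have "\<dots> = (\<integral>w. (if \<not> R w then 1 else 0) * (S d w)\<^sup>2 \<partial>M)"
    by (simp add: SS_expand sum_distrib_left del: sum_subtractf)
  finally show ?thesis .
qed

end



context adept begin

lemma p1_eq: "prob {w\<in>space M. A1 w = 1 \<and> R w} / prob {w\<in>space M. A1 w = 1} = 1 - prob {w\<in>space M. \<not> R w}"
proof -
  have "prob {w\<in>space M. A1 w = 1 \<and> R w} = (\<integral>w. (if A1 w = 1 \<and> R w then 1 else 0) \<partial>M)"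
    by (rule int_ind_eq[symmetric]) measurable
  also have "\<dots> = (\<integral>w. (if A1 w = 1 then 1 else 0) * ((1 * (if R w then 1 else 0) + 0 * (if \<not> R w \<and> A2 w = 1 then 1 else 0)) * (\<lambda>_. 1) (Ypot (dtr1 1) w)) \<partial>M)"
    by (rule Bochner_Integration.integral_cong) auto
  also have "\<dots> = 1/2 * (1 * (\<integral>w. (if R w then 1 else 0) * (\<lambda>_. 1) (Ypot (dtr1 1) w) \<partial>M)
             + 0/2 * (\<integral>w. (if \<not> R w then 1 else 0) * (\<lambda>_. 1) (Ypot (dtr1 1) w) \<partial>M))"
    by (rule key1) auto
  finally have a: "prob {w\<in>space M. A1 w = 1 \<and> R w} = 1/2 * (\<integral>w. (if R w then 1 else 0) \<partial>M)" by simp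
  have c: "(\<integral>w. (if R w then 1 else 0) \<partial>M) + (\<integral>w. (if \<not> R w then 1 else 0) \<partial>M) = (1::real)"
    using int_R_split[of "\<lambda>_. 1"] by (simp add: prob_space)
  have d: "(\<integral>w. (if \<not> R w then 1 else 0) \<partial>M) = prob {w\<in>space M. \<not> R w}"
    using int_ind_eq[of "\<lambda>w. \<not> R w"] by simp
  show ?thesis unfolding A1_prob a using c d by simp
qed

lemma zero_q:
  fixes f :: "'w \<Rightarrow> real"
  assumes q: "prob {w\<in>space M. \<not> R w} = 0" and f: "f \<in> borel_measurable M"
  shows "(\<integral>w. (if \<not> R w then 1 else 0) * f w \<partial>M) = 0"
proof -
  have ev: "{w\<in>space M. \<not> R w} \<in> sets M" by measurable
  have "AE w in M. R w"
    using AE_iff_measurable[OF ev, of R] q ev by (simp add: emeasure_eq_measure)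
  then have "(\<integral>w. (if \<not> R w then 1 else 0) * f w \<partial>M) = (\<integral>w. 0 \<partial>M)"
    by (intro integral_cong_AE) (use f in measurable, auto)
  then show ?thesis by simp
qed

lemma cond_bound:
  assumes mean: "\<And>d j. (\<integral>w. Ypot d w $ j \<partial>M) = \<beta> d"
    and cb: "loewner_le
         (cond_exp_ev M (\<lambda>w. \<not> R w)
            (\<lambda>w. outer (Ypot d w - \<beta> d *\<^sub>R ones) (Ypot d w - \<beta> d *\<^sub>R ones)))
         (covm M (Ypot d))"
  shows "(\<integral>w. (if \<not> R w then 1 else 0) * (S d w)\<^sup>2 \<partial>M) \<le> prob {w\<in>space M. \<not> R w} * (\<integral>w. (S d w)\<^sup>2 \<partial>M)"
proof (cases "prob {w\<in>space M. \<not> R w} = 0")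
  case True
  then show ?thesis using zero_q[OF True, of "\<lambda>w. (S d w)\<^sup>2"] by simp
next
  case False
  then have qp: "0 < prob {w\<in>space M. \<not> R w}" using measure_nonneg[of M] by (simp add: less_le)
  have "(\<integral>w. (if \<not> R w then 1 else 0) * (S d w)\<^sup>2 \<partial>M) / prob {w\<in>space M. \<not> R w} \<le> (\<integral>w. (S d w)\<^sup>2 \<partial>M)"
    using cb[unfolded loewner_le_def, rule_format, of ones]
    unfolding ones_quad cond_sum covm_sum[OF mean] .
  then show ?thesis using qp by (simp add: divide_le_eq mult.commute)
qed

end



lemma arith1: "0 < (m::real) \<Longrightarrow> 0 < d \<Longrightarrow> 0 < sg \<Longrightarrow>
  Z * (k * ((3 - p) * sg) / m) / (d\<^sup>2 * (sg / 2)) = 4 * Z / (m * d\<^sup>2) * k * (1 + (1 - p) / 2)"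
  by (simp add: field_simps power2_eq_square)

theorem mainTheorem4:
  fixes M :: "'w measure"
    and A1 A2 :: "'w \<Rightarrow> real" and R :: "'w \<Rightarrow> bool"
    and Ypot :: "dtr \<Rightarrow> 'w \<Rightarrow> real^'m" and Y :: "'w \<Rightarrow> real^'m"
    and \<beta> :: "dtr \<Rightarrow> real" and s r b2 p1 :: real
    and \<sigma>sq1 \<sigma>sqm \<rho>1 \<rho>m :: real
  assumes P: "prob_space M"
    \<comment> \<open>measurability and finite second moments\<close>
    and meas_A1: "A1 \<in> borel_measurable M" and meas_A2: "A2 \<in> borel_measurable M"
    and meas_R: "R \<in> measurable M (count_space UNIV)"
    and meas_Y: "Y \<in> borel_measurable M"
    and meas_Ypot: "\<And>d. Ypot d \<in> borel_measurable M"
    and sq_int: "\<And>d j. integrable M (\<lambda>w. (Ypot d w $ j)\<^sup>2)"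
    \<comment> \<open>randomization: A1 and A2 are fair coins in {1,-1}, independent of each other
        and of the response / potential outcomes\<close>
    and A1_vals: "\<And>w. A1 w = 1 \<or> A1 w = -1"
    and A2_vals: "\<And>w. A2 w = 1 \<or> A2 w = -1"
    and A1_prob: "measure M {w\<in>space M. A1 w = 1} = 1/2"
    and A2_prob: "measure M {w\<in>space M. A2 w = 1} = 1/2"
    and indep1: "prob_space.indep_set M (sets (vimage_algebra (space M) A1 borel))
         (sets (vimage_algebra (space M)
         (\<lambda>w. (A2 w, R w, Ypot DTR_1_1 w, Ypot DTR_1_m1 w, Ypot DTR_m1 w)) (borel \<Otimes>\<^sub>M count_space UNIV \<Otimes>\<^sub>M borel \<Otimes>\<^sub>M borel \<Otimes>\<^sub>M borel)))"
    and indep2: "prob_space.indep_set M (sets (vimage_algebra (space M) A2 borel))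
         (sets (vimage_algebra (space M)
         (\<lambda>w. (R w, Ypot DTR_1_1 w, Ypot DTR_1_m1 w, Ypot DTR_m1 w)) (count_space UNIV \<Otimes>\<^sub>M borel \<Otimes>\<^sub>M borel \<Otimes>\<^sub>M borel)))"
    \<comment> \<open>p1 = Pr(R = 1 | A1 = 1)\<close>
    and p1_def: "p1 = measure M {w\<in>space M. A1 w = 1 \<and> R w} / measure M {w\<in>space M. A1 w = 1}"
    \<comment> \<open>cell-mean model: E_d(Y_ij) = beta_d for all j\<close>
    and mean_model: "\<And>d j. (\<integral>w. Ypot d w $ j \<partial>M) = \<beta> d"
    \<comment> \<open>working covariance V = s^2 Exch_m(r), positive definite\<close>
    and V_pd: "pos_def ((s\<^sup>2) *\<^sub>R (exch r :: real^'m^'m))"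
    and b2_vals: "b2 = 1 \<or> b2 = -1"
    \<comment> \<open>(a) consistency of potential outcomes\<close>
    and consistency: "\<And>d w. consist A1 R A2 d w = 1 \<Longrightarrow> Y w = Ypot d w"
    \<comment> \<open>(b)\<close>
    and cond_b: "loewner_le
         (cond_exp_ev M (\<lambda>w. \<not> R w)
            (\<lambda>w. outer (Ypot (dtr1 b2) w - \<beta> (dtr1 b2) *\<^sub>R ones) (Ypot (dtr1 b2) w - \<beta> (dtr1 b2) *\<^sub>R ones)))
         (covm M (Ypot (dtr1 b2)))"
    \<comment> \<open>(c)\<close>
    and cov1: "covm M (Ypot (dtr1 b2)) = \<sigma>sq1 *\<^sub>R exch \<rho>1"
    and covm: "covm M (Ypot DTR_m1) = \<sigma>sqm *\<^sub>R exch \<rho>m"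
    and \<sigma>pos: "0 < \<sigma>sq1" "0 < \<sigma>sqm"
  shows "tau2 M A1 R A2 Y (s\<^sup>2 *\<^sub>R exch r) \<beta> (dtr1 b2)
           \<le> 2 * (2 - p1) * \<sigma>sq1 * (1 + (real CARD('m) - 1) * \<rho>1) / real CARD('m)
       \<and> tau2 M A1 R A2 Y (s\<^sup>2 *\<^sub>R exch r) \<beta> DTR_m1
           = 2 * \<sigma>sqm * (1 + (real CARD('m) - 1) * \<rho>m) / real CARD('m)
       \<and> (\<forall>\<rho>. \<rho>1 = \<rho> \<and> \<rho>m = \<rho> \<and> \<sigma>sq1 \<le> \<sigma>sqm \<longrightarrow>
           (\<forall>\<delta> \<alpha> \<beta>'. 0 < \<delta> \<and> 0 < \<alpha> \<and> \<alpha> < 1 \<and> 0 < \<beta>' \<and> \<beta>' < 1 \<longrightarrow>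
              (z_upper \<beta>' + z_upper (\<alpha>/2))\<^sup>2
                * (tau2 M A1 R A2 Y (s\<^sup>2 *\<^sub>R exch r) \<beta> (dtr1 b2)
                   + tau2 M A1 R A2 Y (s\<^sup>2 *\<^sub>R exch r) \<beta> DTR_m1)
                / (\<delta>\<^sup>2 * ((\<sigma>sq1 + \<sigma>sqm) / 2))
              \<le> 4 * (z_upper \<beta>' + z_upper (\<alpha>/2))\<^sup>2 / (real CARD('m) * \<delta>\<^sup>2)
                 * (1 + (real CARD('m) - 1) * \<rho>) * (1 + (1 - p1) / 2)))"
proof -
  interpret adept M A1 A2 R Ypot Y \<beta>
    by (intro adept.intro adept_axioms.intro P) (fact assms)+
  define m where "m = real CARD('m)"
  have mpos: "0 < m" by (simp add: m_def)
  define V where "V = (s\<^sup>2) *\<^sub>R (exch r :: real^'m^'m)"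
  define lam where "lam = s\<^sup>2 * (1 + (real CARD('m) - 1) * r)"
  have Vo: "V *v ones = lam *\<^sub>R ones"
    by (simp add: V_def lam_def scaleR_matrix_vector_assoc[symmetric] exch_ones)
  have tau: "tau2 M A1 R A2 Y (s\<^sup>2 *\<^sub>R exch r) \<beta> d = (\<integral>w. (IW d w * S d w)\<^sup>2 \<partial>M) / m\<^sup>2" for d
    using tau2_eq[OF V_pd Vo[unfolded V_def]] by (simp add: m_def)
  define d1 where "d1 = dtr1 b2"
  define k1 where "k1 = 1 + (real CARD('m) - 1) * \<rho>1"
  define km where "km = 1 + (real CARD('m) - 1) * \<rho>m"
  have E1: "(\<integral>w. (S d1 w)\<^sup>2 \<partial>M) = \<sigma>sq1 * m * k1"
    using covm_sum[OF mean_model, of d1] unfolding d1_def cov1 sum_sum_exch by (simp add: m_def k1_def)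
  have Em: "(\<integral>w. (S DTR_m1 w)\<^sup>2 \<partial>M) = \<sigma>sqm * m * km"
    using covm_sum[OF mean_model, of DTR_m1] unfolding covm sum_sum_exch by (simp add: m_def km_def)
  define q where "q = prob {w\<in>space M. \<not> R w}"
  have q0: "0 \<le> q" by (simp add: q_def)
  have p1q: "p1 = 1 - q" unfolding p1_def q_def by (rule p1_eq)
  define Q where "Q = (\<integral>w. (if \<not> R w then 1 else 0) * (S d1 w)\<^sup>2 \<partial>M)"
  have Qb: "Q \<le> q * (\<sigma>sq1 * m * k1)"
    using cond_bound[OF mean_model cond_b] unfolding Q_def q_def d1_def E1[unfolded d1_def] .
  have t1: "tau2 M A1 R A2 Y (s\<^sup>2 *\<^sub>R exch r) \<beta> (dtr1 b2) = (2 * (\<sigma>sq1 * m * k1) + 2 * Q) / m\<^sup>2"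
    unfolding tau E_IW2_d1[OF b2_vals] using E1 unfolding d1_def Q_def by simp
  have tm: "tau2 M A1 R A2 Y (s\<^sup>2 *\<^sub>R exch r) \<beta> DTR_m1 = 2 * \<sigma>sqm * km / m"
    unfolding tau E_IW2_m1 Em using mpos by (simp add: power2_eq_square field_simps)
  have t1b: "tau2 M A1 R A2 Y (s\<^sup>2 *\<^sub>R exch r) \<beta> (dtr1 b2) \<le> 2 * (2 - p1) * \<sigma>sq1 * k1 / m"
  proof -
    have "(2 * (\<sigma>sq1 * m * k1) + 2 * Q) / m\<^sup>2 \<le> (2 * (\<sigma>sq1 * m * k1) + 2 * (q * (\<sigma>sq1 * m * k1))) / m\<^sup>2"
      using Qb by (intro divide_right_mono) auto
    also have "\<dots> = 2 * (2 - p1) * \<sigma>sq1 * k1 / m"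
      using mpos unfolding p1q by (simp add: power2_eq_square field_simps)
    finally show ?thesis unfolding t1 .
  qed
  have kmpos: "0 \<le> km"
  proof -
    have "0 \<le> (\<integral>w. (S DTR_m1 w)\<^sup>2 \<partial>M)" by (rule Bochner_Integration.integral_nonneg) simp
    then have "0 \<le> (\<sigma>sqm * m) * km" unfolding Em by simp
    moreover have "0 < \<sigma>sqm * m" using \<sigma>pos mpos by simp
    ultimately show ?thesis by (simp add: zero_le_mult_iff)
  qed
  have part3: "(z_upper \<beta>' + z_upper (\<alpha>/2))\<^sup>2
                * (tau2 M A1 R A2 Y (s\<^sup>2 *\<^sub>R exch r) \<beta> (dtr1 b2)
                   + tau2 M A1 R A2 Y (s\<^sup>2 *\<^sub>R exch r) \<beta> DTR_m1)
                / (\<delta>\<^sup>2 * ((\<sigma>sq1 + \<sigma>sqm) / 2))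
              \<le> 4 * (z_upper \<beta>' + z_upper (\<alpha>/2))\<^sup>2 / (real CARD('m) * \<delta>\<^sup>2)
                 * (1 + (real CARD('m) - 1) * \<rho>) * (1 + (1 - p1) / 2)"
    if h: "\<rho>1 = \<rho>" "\<rho>m = \<rho>" "\<sigma>sq1 \<le> \<sigma>sqm" and dp: "0 < \<delta>" for \<rho> \<delta> \<alpha> \<beta>'
  proof -
    define Z where "Z = (z_upper \<beta>' + z_upper (\<alpha>/2))\<^sup>2"
    have Z0: "0 \<le> Z" by (simp add: Z_def)
    have kk: "k1 = km" "km = 1 + (real CARD('m) - 1) * \<rho>" using h by (simp_all add: k1_def km_def)
    have p1le: "p1 \<le> 1" using q0 p1q by simp
    define T where "T = tau2 M A1 R A2 Y (s\<^sup>2 *\<^sub>R exch r) \<beta> (dtr1 b2) + tau2 M A1 R A2 Y (s\<^sup>2 *\<^sub>R exch r) \<beta> DTR_m1"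
    have "T \<le> 2 * (2 - p1) * \<sigma>sq1 * km / m + 2 * \<sigma>sqm * km / m"
      unfolding T_def tm using t1b kk by simp
    also have "\<dots> = km * (2 * (2 - p1) * \<sigma>sq1 + 2 * \<sigma>sqm) / m" using mpos by (simp add: field_simps)
    also have "\<dots> \<le> km * ((3 - p1) * (\<sigma>sq1 + \<sigma>sqm)) / m"
    proof (intro divide_right_mono mult_left_mono)
      have "0 \<le> (1 - p1) * (\<sigma>sqm - \<sigma>sq1)" using p1le h(3) by simp
      then show "2 * (2 - p1) * \<sigma>sq1 + 2 * \<sigma>sqm \<le> (3 - p1) * (\<sigma>sq1 + \<sigma>sqm)"
        by (simp add: algebra_simps)
    qed (use kmpos mpos in auto)
    finally have Tb: "T \<le> km * ((3 - p1) * (\<sigma>sq1 + \<sigma>sqm)) / m" .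
    have den: "0 < \<delta>\<^sup>2 * ((\<sigma>sq1 + \<sigma>sqm) / 2)" using dp \<sigma>pos by simp
    have "Z * T / (\<delta>\<^sup>2 * ((\<sigma>sq1 + \<sigma>sqm) / 2)) \<le> Z * (km * ((3 - p1) * (\<sigma>sq1 + \<sigma>sqm)) / m) / (\<delta>\<^sup>2 * ((\<sigma>sq1 + \<sigma>sqm) / 2))"
      using Tb Z0 den by (intro divide_right_mono mult_left_mono) auto
    also have "\<dots> = 4 * Z / (m * \<delta>\<^sup>2) * km * (1 + (1 - p1) / 2)"
      by (rule arith1) (use mpos dp \<sigma>pos in auto)
    finally show ?thesis unfolding Z_def T_def m_def kk(2) by simp
  qed
  show ?thesis
    using t1b tm part3 unfolding k1_def km_def m_def by auto
qed



end
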